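(* Let $x$ be a random vector in $\mathbb{R}^n$ (the data), let $e: \mathbb{R}^n \to \mathbb{R}^m$ be a measurable map (encoder) and $g: \mathbb{R}^m \to \mathbb{R}^n$ a $K$-Lipschitz map with respect to the Euclidean norms (decoder). Let $z = e(x)$, assume $z$ has finite second moments and $\mathbb{E}\|x - g(z)\|_2 < \infty$, and let $\bar z_i = \mathbb{E}[z_i]$ and $\sigma_i$ be the standard deviation of $z_i$. Let $P \subseteq \{1,\dots,m\}$ and define the pruned code $\tilde z_P$ by $[\tilde z_P]_i = z_i$ for $i \notin P$ and $[\tilde z_P]_i = \bar z_i$ for $i \in P$. Let $\epsilon = \mathbb{E}\|x - g(z)\|_2$ and $\tilde\epsilon = \mathbb{E}\|x - g(\tilde z_P)\|_2$. Then $$\tilde\epsilon - \epsilon \le K\sqrt{\sum_{i\in P} \sigma_i^2}.$$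
   Context: $\epsilon$ is the $L_2$ reconstruction error of the autoencoder, and $\tilde\epsilon$ the $L_2$ reconstruction error after pruning (fixing at their means) the latent dimensions indexed by $P$. *)

theory Defs
  imports "HOL-Probability.Probability"
begin

definition std_dev :: "'a measure \<Rightarrow> ('a \<Rightarrow> real) \<Rightarrow> real" where
  "std_dev M X = sqrt (integral\<^sup>L M (\<lambda>w. (X w - integral\<^sup>L M X)\<^sup>2))"

definition pruned_code :: "'a measure \<Rightarrow> ('a \<Rightarrow> real ^ 'm) \<Rightarrow> 'm set \<Rightarrow> 'a \<Rightarrow> real ^ 'm" where
  "pruned_code M z P w = (\<chi> i. if i \<in> P then integral\<^sup>L M (\<lambda>v. z v $ i) else z w $ i)"

end

theory Submission
  imports Defs
begin

theorem theorem3: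
  fixes M :: "'a measure"
    and x :: "'a \<Rightarrow> real ^ 'n"
    and e :: "real ^ 'n \<Rightarrow> real ^ 'm"
    and g :: "real ^ 'm \<Rightarrow> real ^ 'n"
    and K :: real
    and P :: "'m set"
  assumes "prob_space M"
    and "x \<in> borel_measurable M"
    and "e \<in> borel_measurable borel"
    and "K-lipschitz_on UNIV g"
    and "\<And>i. integrable M (\<lambda>w. ((e (x w)) $ i)\<^sup>2)"
    and "integrable M (\<lambda>w. norm (x w - g (e (x w))))"
  shows "integral\<^sup>L M (\<lambda>w. norm (x w - g (pruned_code M (\<lambda>v. e (x v)) P w)))
           - integral\<^sup>L M (\<lambda>w. norm (x w - g (e (x w))))
         \<le> K * sqrt (\<Sum>i\<in>P. (std_dev M (\<lambda>w. e (x w) $ i))\<^sup>2)"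
proof -
  interpret prob_space M by fact
  define z where "z w = e (x w)" for w
  define m where "m i = integral\<^sup>L M (\<lambda>v. z v $ i)" for i
  define pr where "pr w = pruned_code M z P w" for w
  define D where "D w = sqrt (\<Sum>i\<in>P. (z w $ i - m i)\<^sup>2)" for w
  have K0: "0 \<le> K" using assms(4) by (simp add: lipschitz_on_def)
  have zm[measurable]: "z \<in> borel_measurable M"
    unfolding z_def using assms(2,3) by (simp add: measurable_compose)
  have zim[measurable]: "(\<lambda>w. z w $ i) \<in> borel_measurable M" for i
  proof -
    have "continuous_on UNIV (\<lambda>v::real^'m. v $ i)" by (intro continuous_intros)
    from borel_measurable_continuous_onI[OF this] zm show ?thesis
      using measurable_compose[of z M borel "\<lambda>v. v $ i" borel] by simp
  qed
  have zi2: "integrable M (\<lambda>w. (z w $ i)\<^sup>2)" for i using assms(5) by (simp add: z_def)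
  have zi: "integrable M (\<lambda>w. z w $ i)" for i
    by (rule square_integrable_imp_integrable[OF zim zi2])
  have prc: "pr w = (\<lambda>v. \<chi> i. if i \<in> P then m i else v $ i) (z w)" for w
    unfolding pr_def pruned_code_def m_def by simp
  have cont: "continuous_on UNIV (\<lambda>v::real^'m. \<chi> i. if i \<in> P then m i else v $ i)"
    by (intro continuous_on_vec_lambda, case_tac "i \<in> P") (auto intro!: continuous_intros)
  have prm[measurable]: "pr \<in> borel_measurable M"
    unfolding prc using borel_measurable_continuous_onI[OF cont] zm
    by (simp add: measurable_compose)
  have gc: "continuous_on UNIV g" using assms(4) by (rule lipschitz_on_continuous_on)
  have gm[measurable]: "g \<in> borel_measurable borel" using borel_measurable_continuous_onI[OF gc] .
  have normD: "norm (z w - pr w) = D w" for w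
  proof -
    have "norm (z w - pr w) = sqrt (\<Sum>i\<in>UNIV. (if i \<in> P then z w $ i - m i else 0)\<^sup>2)"
      unfolding norm_vec_def L2_set_def prc by (intro arg_cong[where f=sqrt] sum.cong) auto
    also have "(\<Sum>i\<in>UNIV. (if i \<in> P then z w $ i - m i else 0)\<^sup>2) = (\<Sum>i\<in>P. (z w $ i - m i)\<^sup>2)"
      by (subst sum.cong[OF refl, where h="\<lambda>i. if i \<in> P then (z w $ i - m i)\<^sup>2 else 0"])
         (auto simp: sum.If_cases)
    finally show ?thesis unfolding D_def .
  qed
  have pt: "norm (x w - g (pr w)) \<le> norm (x w - g (z w)) + K * D w" for w
  proof -
    have "dist (g (z w)) (g (pr w)) \<le> K * dist (z w) (pr w)"
      using assms(4) by (auto intro: lipschitz_onD)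
    hence "norm (g (z w) - g (pr w)) \<le> K * D w" by (simp add: dist_norm normD)
    moreover have "norm (x w - g (pr w)) \<le> norm (x w - g (z w)) + norm (g (z w) - g (pr w))"
      using norm_triangle_ineq[of "x w - g (z w)" "g (z w) - g (pr w)"] by simp
    ultimately show ?thesis by linarith
  qed
  have Dm[measurable]: "D \<in> borel_measurable M" unfolding D_def by measurable
  have sqi: "integrable M (\<lambda>w. (z w $ i - m i)\<^sup>2)" for i
  proof -
    have "integrable M (\<lambda>w. (z w $ i)\<^sup>2 - 2 * m i * z w $ i + (m i)\<^sup>2)"
      using zi2 zi by (intro Bochner_Integration.integrable_add Bochner_Integration.integrable_diff) auto
    thus ?thesis by (simp add: power2_diff algebra_simps)
  qed
  have D2: "(D w)\<^sup>2 = (\<Sum>i\<in>P. (z w $ i - m i)\<^sup>2)" for w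
    unfolding D_def by (simp add: sum_nonneg)
  have D2i: "integrable M (\<lambda>w. (D w)\<^sup>2)" unfolding D2 using sqi by auto
  have Di: "integrable M D" by (rule square_integrable_imp_integrable[OF Dm D2i])
  have nzi: "integrable M (\<lambda>w. norm (x w - g (z w)))" using assms(6) by (simp add: z_def)
  have xm[measurable]: "x \<in> borel_measurable M" using assms(2) .
  have npm: "(\<lambda>w. norm (x w - g (pr w))) \<in> borel_measurable M" by measurable
  have D0: "0 \<le> D w" for w unfolding D_def by (simp add: sum_nonneg)
  have npi: "integrable M (\<lambda>w. norm (x w - g (pr w)))"
    by (rule Bochner_Integration.integrable_bound[where f="\<lambda>w. norm (x w - g (z w)) + K * D w"])
       (use nzi Di pt npm D0 K0 in \<open>auto intro!: AE_I2 order_trans[OF pt]\<close>)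
  have "integral\<^sup>L M (\<lambda>w. norm (x w - g (pr w))) \<le> integral\<^sup>L M (\<lambda>w. norm (x w - g (z w)) + K * D w)"
    by (rule integral_mono) (use npi nzi Di pt in auto)
  also have "\<dots> = integral\<^sup>L M (\<lambda>w. norm (x w - g (z w))) + K * integral\<^sup>L M D"
    using nzi Di by simp
  finally have A: "integral\<^sup>L M (\<lambda>w. norm (x w - g (pr w))) - integral\<^sup>L M (\<lambda>w. norm (x w - g (z w)))
      \<le> K * integral\<^sup>L M D" by simp
  have "0 \<le> variance D" by (rule variance_positive)
  hence "(integral\<^sup>L M D)\<^sup>2 \<le> integral\<^sup>L M (\<lambda>w. (D w)\<^sup>2)"
    using variance_eq[OF Di D2i] by simp
  moreover have "0 \<le> integral\<^sup>L M D" by (rule integral_nonneg_AE) (simp add: D0)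
  ultimately have B: "integral\<^sup>L M D \<le> sqrt (integral\<^sup>L M (\<lambda>w. (D w)\<^sup>2))"
    by (simp add: real_le_rsqrt)
  have C: "integral\<^sup>L M (\<lambda>w. (D w)\<^sup>2) = (\<Sum>i\<in>P. (std_dev M (\<lambda>w. z w $ i))\<^sup>2)"
  proof -
    have "integral\<^sup>L M (\<lambda>w. (D w)\<^sup>2) = (\<Sum>i\<in>P. integral\<^sup>L M (\<lambda>w. (z w $ i - m i)\<^sup>2))"
      unfolding D2 using sqi by (simp add: Bochner_Integration.integral_sum)
    also have "\<dots> = (\<Sum>i\<in>P. (std_dev M (\<lambda>w. z w $ i))\<^sup>2)"
      unfolding std_dev_def m_def by (intro sum.cong refl) simp
    finally show ?thesis .
  qed
  have "K * integral\<^sup>L M D \<le> K * sqrt (\<Sum>i\<in>P. (std_dev M (\<lambda>w. z w $ i))\<^sup>2)"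
    using B C K0 by (simp add: mult_left_mono)
  with A show ?thesis unfolding pr_def z_def by simp
qed

end
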